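(* For all integers $a,b,c,d\in\mathbb Z$, the following are equivalent in the algebra $(\mathbb Z,+,\mathbb Z)$: (1) $a:b::_m c:d$; (2) there are $k,\ell,o,u\in\mathbb Z$ with $a=k+o$, $b=\ell+o$, $c=k+u$, $d=\ell+u$; (3) $a-b=c-d$.
   Context: $(\mathbb Z,+,\mathbb Z)$ is the algebra with universe $\mathbb Z$, binary addition, and every integer as a constant (0-ary operation). Terms are built from a variable set $X$, $+$ and integer constants; $X(s)$ denotes the variables of term $s$. A justification is a pair of terms $s\to t$ with $X(t)\subseteq X(s)$. Monolinear justifications are those in which $s$ and $t$ contain no variable other than one fixed variable $x$, and $x$ occurs at most once in $s$ and at most once in $t$. For $a,b\in\mathbb Z$, $\uparrow^m(a\to b)$ is the set of monolinear justifications $s\to t$ with $a=s(\mathbf o)$, $b=t(\mathbf o)$ for some value $\mathbf o$ of the variables; $\uparrow^m(a\to b:\!\cdot\,c\to d):=\uparrow^m(a\to b)\cap\uparrow^m(c\to d)$. A monolinear justification is trivial if it lies in $\uparrow^m(a'\to b':\!\cdot\,c'\to d')$ for all $a',b',c',d'$. The arrow proportion $a\to b:\!\cdot_m\,c\to d$ holds iff either (i) all justifications in $\uparrow^m(a\to b)\cup\uparrow^m(c\to d)$ are trivial, or (ii) $J_d:=\uparrow^m(a\to b:\!\cdot\,c\to d)$ contains a non-trivial justification and for every $d'$, $J_d\subseteq J_{d'}$ implies $J_{d'}$ contains a non-trivial justification and $J_{d'}\subseteq J_d$ (inclusions ignoring trivial justifications). Finally $a:b::_m c:d$ iff $a\to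 b:\!\cdot_m\,c\to d$, $b\to a:\!\cdot_m\,d\to c$, $c\to d:\!\cdot_m\,a\to b$ and $d\to c:\!\cdot_m\,b\to a$ all hold. *)

theory Defs
  imports Main
begin

datatype zterm = Var nat | Const int | Plus zterm zterm

primrec vars :: "zterm \<Rightarrow> nat set" where
  "vars (Var v) = {v}"
| "vars (Const k) = {}"
| "vars (Plus s t) = vars s \<union> vars t"

primrec occ :: "nat \<Rightarrow> zterm \<Rightarrow> nat" where
  "occ x (Var v) = (if v = x then 1 else 0)"
| "occ x (Const k) = 0"
| "occ x (Plus s t) = occ x s + occ x t"

primrec eval :: "(nat \<Rightarrow> int) \<Rightarrow> zterm \<Rightarrow> int" where
  "eval \<sigma> (Var v) = \<sigma> v"
| "eval \<sigma> (Const k) = k"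
| "eval \<sigma> (Plus s t) = eval \<sigma> s + eval \<sigma> t"

definition xvar :: nat where "xvar = 0"

definition monolinear :: "zterm \<times> zterm \<Rightarrow> bool" where
  "monolinear j \<longleftrightarrow> (case j of (s, t) \<Rightarrow>
      vars t \<subseteq> vars s \<and> vars s \<subseteq> {xvar} \<and> vars t \<subseteq> {xvar}
      \<and> occ xvar s \<le> 1 \<and> occ xvar t \<le> 1)"

definition up_m :: "int \<Rightarrow> int \<Rightarrow> (zterm \<times> zterm) set" where
  "up_m a b = {(s, t). monolinear (s, t) \<and> (\<exists>\<sigma>. a = eval \<sigma> s \<and> b = eval \<sigma> t)}"

definition up_m2 :: "int \<Rightarrow> int \<Rightarrow> int \<Rightarrow> int \<Rightarrow> (zterm \<times> zterm) set" where
  "up_m2 a b c d = up_m a b \<inter> up_m c d"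

definition trivial_m :: "zterm \<times> zterm \<Rightarrow> bool" where
  "trivial_m j \<longleftrightarrow> monolinear j \<and> (\<forall>a' b' c' d'. j \<in> up_m2 a' b' c' d')"

definition nontriv :: "(zterm \<times> zterm) set \<Rightarrow> (zterm \<times> zterm) set" where
  "nontriv J = {j \<in> J. \<not> trivial_m j}"

definition arrow_prop_m :: "int \<Rightarrow> int \<Rightarrow> int \<Rightarrow> int \<Rightarrow> bool" where
  "arrow_prop_m a b c d \<longleftrightarrow>
     (\<forall>j \<in> up_m a b \<union> up_m c d. trivial_m j)
   \<or> (nontriv (up_m2 a b c d) \<noteq> {} \<and>
      (\<forall>d'. nontriv (up_m2 a b c d) \<subseteq> nontriv (up_m2 a b c d') \<longrightarrow>
            nontriv (up_m2 a b c d') \<noteq> {} \<and>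
            nontriv (up_m2 a b c d') \<subseteq> nontriv (up_m2 a b c d)))"

definition analogy_m :: "int \<Rightarrow> int \<Rightarrow> int \<Rightarrow> int \<Rightarrow> bool" where
  "analogy_m a b c d \<longleftrightarrow> arrow_prop_m a b c d \<and> arrow_prop_m b a d c
     \<and> arrow_prop_m c d a b \<and> arrow_prop_m d c b a"

end

theory Submission
  imports Defs
begin

lemma eval_lin: "vars s \<subseteq> {0} \<Longrightarrow> eval \<sigma> s = int (occ 0 s) * \<sigma> 0 + eval (\<lambda>_. 0) s"
  by (induction s) (auto simp: algebra_simps)

lemma occ_vars: "occ x s = 0 \<longleftrightarrow> x \<notin> vars s"
  by (induction s) auto

lemma key:
  assumes "j \<in> up_m a b" "j \<in> up_m c d"
  shows "a - b = c - d \<or> b = d"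
proof -
  obtain s t where j: "j = (s,t)" by (cases j)
  from assms obtain \<sigma> \<tau> where m: "monolinear (s,t)" and
    e: "a = eval \<sigma> s" "b = eval \<sigma> t" "c = eval \<tau> s" "d = eval \<tau> t"
    unfolding up_m_def j by auto
  from m have v: "vars s \<subseteq> {0}" "vars t \<subseteq> {0}" "vars t \<subseteq> vars s" "occ 0 s \<le> 1" "occ 0 t \<le> 1"
    unfolding monolinear_def xvar_def by auto
  have "occ 0 t \<le> occ 0 s" using v(3) occ_vars[of 0 s] occ_vars[of 0 t] v(5) by (cases "occ 0 t") auto
  then have "occ 0 s = occ 0 t \<or> occ 0 t = 0" using v(4,5) by linarith
  then show ?thesis
    using e eval_lin[OF v(1), of \<sigma>] eval_lin[OF v(1), of \<tau>] eval_lin[OF v(2), of \<sigma>]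
      eval_lin[OF v(2), of \<tau>] by auto
qed

lemma ne_arrow:
  assumes "arrow_prop_m a b c d"
  shows "a - b = c - d \<or> b = d"
proof -
  have mc: "monolinear (Const a, Const b)" unfolding monolinear_def by auto
  have "(Const a, Const b) \<in> up_m a b" using mc unfolding up_m_def by auto
  moreover have "\<not> trivial_m (Const a, Const b)"
    unfolding trivial_m_def up_m2_def up_m_def by (auto intro!: exI[of _ "a+1"])
  ultimately have "nontriv (up_m2 a b c d) \<noteq> {}" using assms unfolding arrow_prop_m_def by blast
  then obtain j where "j \<in> up_m a b" "j \<in> up_m c d" unfolding nontriv_def up_m2_def by auto
  then show ?thesis using key by blast
qed

lemma eq_arrow:
  assumes "a - b = c - (d::int)"
  shows "arrow_prop_m a b c d"
proof -
  define j where "j = (Plus (Var 0) (Const 0), Plus (Var 0) (Const (b - a)))"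
  have mj: "monolinear j" unfolding j_def monolinear_def xvar_def by auto
  have ab: "\<And>a' b'. j \<in> up_m a' b' \<longleftrightarrow> b' - a' = b - a"
  proof -
    fix a' b'
    show "j \<in> up_m a' b' \<longleftrightarrow> b' - a' = b - a"
    proof
      assume "j \<in> up_m a' b'" then show "b' - a' = b - a" unfolding up_m_def j_def by auto
    next
      assume h: "b' - a' = b - a"
      have "a' = eval (\<lambda>_. a') (fst j) \<and> b' = eval (\<lambda>_. a') (snd j)" using h unfolding j_def by auto
      then show "j \<in> up_m a' b'" using mj unfolding up_m_def j_def by auto
    qed
  qed
  have "j \<notin> up_m 0 (b - a + 1)" using ab by simp
  then have nt: "\<not> trivial_m j" unfolding trivial_m_def up_m2_def by blast
  have jin: "j \<in> nontriv (up_m2 a b c d)" using nt ab assms unfolding nontriv_def up_m2_def by auto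
  have "\<forall>d'. nontriv (up_m2 a b c d) \<subseteq> nontriv (up_m2 a b c d') \<longrightarrow>
            nontriv (up_m2 a b c d') \<noteq> {} \<and>
            nontriv (up_m2 a b c d') \<subseteq> nontriv (up_m2 a b c d)"
  proof (intro allI impI)
    fix d' assume "nontriv (up_m2 a b c d) \<subseteq> nontriv (up_m2 a b c d')"
    then have "j \<in> up_m c d'" using jin unfolding nontriv_def up_m2_def by auto
    then have "d' = d" using ab assms by auto
    then show "nontriv (up_m2 a b c d') \<noteq> {} \<and> nontriv (up_m2 a b c d') \<subseteq> nontriv (up_m2 a b c d)"
      using jin by auto
  qed
  then show ?thesis using jin unfolding arrow_prop_m_def by blast
qed

theorem mainTheorem4:
  fixes a b c d :: int
  shows "(analogy_m a b c d \<longleftrightarrow> (\<exists>k l ov u. a = k + ov \<and> b = l + ov \<and> c = k + u \<and> d = l + u))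
       \<and> ((\<exists>k l ov u. a = k + ov \<and> b = l + ov \<and> c = k + u \<and> d = l + u) \<longleftrightarrow> a - b = c - d)"
proof -
  have E: "(\<exists>k l ov u. a = k + ov \<and> b = l + ov \<and> c = k + u \<and> d = l + u) \<longleftrightarrow> a - b = c - d"
  proof
    assume "\<exists>k l ov u. a = k + ov \<and> b = l + ov \<and> c = k + u \<and> d = l + u"
    then show "a - b = c - d" by auto
  next
    assume h: "a - b = c - d"
    show "\<exists>k l ov u. a = k + ov \<and> b = l + ov \<and> c = k + u \<and> d = l + u"
      by (rule exI[of _ a], rule exI[of _ b], rule exI[of _ 0], rule exI[of _ "c - a"]) (use h in auto)
  qed
  have A: "analogy_m a b c d \<longleftrightarrow> a - b = c - d"
  proof
    assume "analogy_m a b c d"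
    then have "arrow_prop_m a b c d" "arrow_prop_m b a d c" unfolding analogy_m_def by auto
    from ne_arrow[OF this(1)] ne_arrow[OF this(2)] show "a - b = c - d" by auto
  next
    assume h: "a - b = c - d"
    show "analogy_m a b c d" unfolding analogy_m_def
      using eq_arrow[of a b c d] eq_arrow[of b a d c] eq_arrow[of c d a b] eq_arrow[of d c b a] h
      by auto
  qed
  show ?thesis using A E by blast
qed

end
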